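(* Let $n>m\geq 1$ be integers and $\gamma>0$, and write the Taylor expansion of the squared magnitude of Budak's function as $|G^{\gamma}_{mn}(j\omega)|^2=1+c_1\omega^2+c_2\omega^4+O(\omega^6)$. Then: (i) $c_1=0$ if and only if $$\gamma=\frac{(2n-1)\pm\sqrt{(2n-1)(2m-1)}}{2(n-m)},$$ and both of these values satisfy $\gamma>1/2$; for all other $\gamma>0$ the amplitude approximation is maximally flat of order $1$. (ii) There is no $\gamma>0$ with $c_1=c_2=0$; hence the amplitude approximation given by $G^{\gamma}_{mn}$ is never maximally flat of order greater than $2$, and order $2$ is attained exactly for the values of $\gamma$ in (i).
   Context: Generalized Bessel polynomials: $B_n(s,\alpha,\beta)=\sum_{k=0}^{n}\binom{n}{k}\frac{(n+k+\alpha-2)^{(k)}}{\beta^k}s^{n-k}$, with $(q)^{(k)}=q(q-1)\cdots(q-k+1)$, $(q)^{(0)}=1$. Budak's function is $G^{\gamma}_{mn}(s)=K\,\frac{B_m(2(\gamma-1)s,2,1)}{B_n(2\gamma s,2,1)}$ with $K=\frac{B_n(0,2,1)}{B_m(0,2,1)}$, so $G^{\gamma}_{mn}(0)=1$. An amplitude approximation of unit amplitude is maximally flat of order $k$ if, apart from the constant term $1$, the Taylor expansion of $|H(j\omega)|^2$ about $\omega=0$ begins with the term in $\omega^{2k}$. *)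

theory Defs
  imports "HOL-Analysis.Analysis" "HOL-Library.Landau_Symbols"
begin

definition falling :: "real \<Rightarrow> nat \<Rightarrow> real" where
  "falling q k = (\<Prod>i<k. q - real i)"

definition genBessel :: "nat \<Rightarrow> complex \<Rightarrow> real \<Rightarrow> real \<Rightarrow> complex" where
  "genBessel n s \<alpha> \<beta> =
     (\<Sum>k\<le>n. of_nat (n choose k) * of_real (falling (real n + real k + \<alpha> - 2) k / \<beta> ^ k)
              * s ^ (n - k))"

definition budakG :: "real \<Rightarrow> nat \<Rightarrow> nat \<Rightarrow> complex \<Rightarrow> complex" where
  "budakG \<gamma> m n s =
     (genBessel n 0 2 1 / genBessel m 0 2 1) *
     (genBessel m (of_real (2 * (\<gamma> - 1)) * s) 2 1 / genBessel n (of_real (2 * \<gamma>) * s) 2 1)"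

definition max_flat :: "(complex \<Rightarrow> complex) \<Rightarrow> nat \<Rightarrow> bool" where
  "max_flat H k \<longleftrightarrow> (\<exists>c::real. c \<noteq> 0 \<and>
     (\<lambda>\<omega>::real. (cmod (H (\<i> * of_real \<omega>)))\<^sup>2 - 1 - c * \<omega> ^ (2 * k)) \<in> o[at 0](\<lambda>\<omega>. \<omega> ^ (2 * k)))"

end

theory Submission
  imports Defs
begin


lemma sum_split6:
  fixes F :: "nat \<Rightarrow> 'a::comm_monoid_add"
  shows "(\<Sum>j<K+6. F j) = (\<Sum>j<6. F j) + (\<Sum>j<K. F (j+6))"
proof (induction K)
  case (Suc K)
  have "{..<Suc K + 6} = insert (K+6) {..<K+6}" by auto
  then show ?case using Suc by (simp add: ac_simps)
qed simp

lemma expand: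
  fixes A :: "nat \<Rightarrow> real"
  assumes Z: "\<forall>j>N. A j = 0"
  shows "\<exists>H. isCont H 0 \<and> (\<forall>\<omega>. (cmod (\<Sum>j\<le>N. complex_of_real (A j) * (\<i> * complex_of_real \<omega>)^j))\<^sup>2
     = (A 0)\<^sup>2 + ((A 1)\<^sup>2 - 2*A 0*A 2)*\<omega>\<^sup>2 + ((A 2)\<^sup>2 - 2*A 1*A 3 + 2*A 0*A 4)*\<omega>^4 + \<omega>^6 * H \<omega>)"
proof -
  define F where "F j \<omega> = complex_of_real (A j) * (\<i> * complex_of_real \<omega>)^j" for j \<omega>
  define g where "g \<omega> = (\<Sum>j<N+1. complex_of_real (A (j+6)) * \<i>^(j+6) * complex_of_real \<omega>^j)" for \<omega>
  have g: "isCont g 0" unfolding g_def by (intro continuous_intros)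
  have gr: "isCont (\<lambda>\<omega>. Re (g \<omega>)) 0" and gi: "isCont (\<lambda>\<omega>. Im (g \<omega>)) 0"
    using g by (auto intro: continuous_intros)
  have split: "(\<Sum>j\<le>N. F j \<omega>) = (\<Sum>j<6. F j \<omega>) + complex_of_real (\<omega>^6) * g \<omega>" for \<omega>
  proof -
    have "(\<Sum>j\<le>N. F j \<omega>) = (\<Sum>j<(N+1)+6. F j \<omega>)"
      by (rule sum.mono_neutral_left) (auto simp: F_def Z)
    also have "\<dots> = (\<Sum>j<6. F j \<omega>) + (\<Sum>j<N+1. F (j+6) \<omega>)" by (rule sum_split6)
    also have "(\<Sum>j<N+1. F (j+6) \<omega>) = complex_of_real (\<omega>^6) * g \<omega>"
      unfolding g_def sum_distrib_left F_def
      by (rule sum.cong) (simp_all add: power_mult_distrib power_add algebra_simps)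
    finally show ?thesis .
  qed
  define H where "H \<omega> = -2*A 2*A 4 + (A 4)\<^sup>2*\<omega>\<^sup>2 + (A 3)\<^sup>2 + 2*A 1*A 5 - 2*A 3*A 5*\<omega>\<^sup>2 + (A 5)\<^sup>2*\<omega>^4
     + 2*(A 0 - A 2*\<omega>\<^sup>2 + A 4*\<omega>^4) * Re (g \<omega>) + \<omega>^6 * (Re (g \<omega>))\<^sup>2
     + 2*(A 1*\<omega> - A 3*\<omega>^3 + A 5*\<omega>^5) * Im (g \<omega>) + \<omega>^6 * (Im (g \<omega>))\<^sup>2" for \<omega>
  have "isCont H 0" unfolding H_def using gr gi by (intro continuous_intros)
  moreover have "(cmod (\<Sum>j\<le>N. F j \<omega>))\<^sup>2
     = (A 0)\<^sup>2 + ((A 1)\<^sup>2 - 2*A 0*A 2)*\<omega>\<^sup>2 + ((A 2)\<^sup>2 - 2*A 1*A 3 + 2*A 0*A 4)*\<omega>^4 + \<omega>^6 * H \<omega>" for \<omega>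
  proof -
    have h: "(\<Sum>j<6. F j \<omega>) = Complex (A 0 - A 2*\<omega>\<^sup>2 + A 4*\<omega>^4) (A 1*\<omega> - A 3*\<omega>^3 + A 5*\<omega>^5)"
      by (simp add: F_def numeral_eq_Suc lessThan_Suc power_mult_distrib complex_eq_iff power2_eq_square)
    show ?thesis unfolding split h cmod_power2 H_def
      by (simp add: power2_eq_square) algebra
  qed
  ultimately show ?thesis unfolding F_def by blast
qed




lemma falling_front: "falling q (Suc k) = q * falling (q - 1) k"
  unfolding falling_def prod.lessThan_Suc_shift by (simp add: algebra_simps)

lemma falling_split: "j \<le> k \<Longrightarrow> falling q k = falling q j * falling (q - real j) (k - j)"
proof (induction j)
  case 0 then show ?case by (simp add: falling_def)
next
  case (Suc j)
  then have kj: "k - j = Suc (k - Suc j)" by simp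
  have "falling q k = falling q j * falling (q - real j) (k - j)" using Suc by simp
  also have "\<dots> = falling q j * ((q - real j) * falling (q - real j - 1) (k - Suc j))"
    by (simp add: kj falling_front)
  also have "\<dots> = falling q (Suc j) * falling (q - real (Suc j)) (k - Suc j)"
    by (simp add: falling_def algebra_simps)
  finally show ?case .
qed

lemma falling_pos: "real k \<le> q \<Longrightarrow> 0 < q \<Longrightarrow> k \<le> n \<Longrightarrow> q = real n \<Longrightarrow> falling q k > 0"
  unfolding falling_def by (intro prod_pos) auto

lemma genBessel_reindex:
  "genBessel n s 2 1 = (\<Sum>j\<le>n. of_real (real (n choose j) * falling (real (2*n - j)) (n - j)) * s^j)"
proof -
  have "genBessel n s 2 1 = (\<Sum>k\<le>n. of_nat (n choose k) * of_real (falling (real n + real k) k) * s ^ (n - k))"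
    unfolding genBessel_def by simp
  also have "\<dots> = (\<Sum>j\<le>n. of_nat (n choose (n-j)) * of_real (falling (real n + real (n-j)) (n-j)) * s ^ (n - (n-j)))"
    by (rule sum.reindex_bij_witness[of _ "\<lambda>j. n - j" "\<lambda>j. n - j"]) auto
  also have "\<dots> = (\<Sum>j\<le>n. of_real (real (n choose j) * falling (real (2*n - j)) (n - j)) * s^j)"
    by (rule sum.cong) (auto simp: binomial_symmetric[symmetric] of_nat_diff)
  finally show ?thesis .
qed




definition rr :: "nat \<Rightarrow> real \<Rightarrow> nat \<Rightarrow> real" where
  "rr n y j = y^j * (\<Prod>i<j. real n - real i) / (fact j * falling (2 * real n) j)"

lemma rr_1: "n \<ge> 1 \<Longrightarrow> rr n y 1 = y / 2"
  unfolding rr_def falling_def by simp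
lemma rr_2: "rr n y 2 = y^2 * (real n * (real n - 1)) / (2 * ((2 * real n) * (2 * real n - 1)))"
  unfolding rr_def falling_def by (simp add: numeral_eq_Suc lessThan_Suc algebra_simps)
lemma rr_3: "rr n y 3 = y^3 * (real n * (real n - 1) * (real n - 2)) / (6 * ((2 * real n) * (2 * real n - 1) * (2 * real n - 2)))"
  unfolding rr_def falling_def by (simp add: numeral_eq_Suc lessThan_Suc algebra_simps)
lemma rr_4: "rr n y 4 = y^4 * (real n * (real n - 1) * (real n - 2) * (real n - 3)) / (24 * ((2 * real n) * (2 * real n - 1) * (2 * real n - 2) * (2 * real n - 3)))"
  unfolding rr_def falling_def by (simp add: numeral_eq_Suc lessThan_Suc algebra_simps)

lemma rr1: "n \<ge> 1 \<Longrightarrow> (rr n y 1)\<^sup>2 - 2 * rr n y 2 = y\<^sup>2 / (4 * (2 * real n - 1))"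
  unfolding rr_def falling_def
  by (simp add: numeral_eq_Suc lessThan_Suc field_simps)

lemma rr2_gen: "N \<ge> (2::real) \<Longrightarrow> (y^2 * (N * (N - 1)) / (2 * ((2 * N) * (2 * N - 1))))\<^sup>2 - 2 * (y/2) * (y^3 * (N * (N - 1) * (N - 2)) / (6 * ((2 * N) * (2 * N - 1) * (2 * N - 2))))
  + 2 * (y^4 * (N * (N - 1) * (N - 2) * (N - 3)) / (24 * ((2 * N) * (2 * N - 1) * (2 * N - 2) * (2 * N - 3))))
   = y^4 * (N - 1) / (16 * (2 * N - 1)\<^sup>2 * (2 * N - 3))"
proof -
  assume "N \<ge> 2"
  then have h: "2 * N - 1 \<noteq> 0" "2 * N - 2 \<noteq> 0" "2 * N - 3 \<noteq> 0" "N \<noteq> 0" by auto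
  show ?thesis using h by (simp add: divide_simps) (simp add: algebra_simps power2_eq_square power_numeral_reduce)
qed

lemma rr2: "n \<ge> 1 \<Longrightarrow> (rr n y 2)\<^sup>2 - 2 * rr n y 1 * rr n y 3 + 2 * rr n y 4
   = y^4 * (real n - 1) / (16 * (2 * real n - 1)\<^sup>2 * (2 * real n - 3))"
proof (cases "n = 1")
  case True then show ?thesis unfolding rr_def falling_def by (simp add: numeral_eq_Suc lessThan_Suc)
next
  case False
  assume "n \<ge> 1"
  with False have n2: "real n \<ge> 2" by simp
  then show ?thesis unfolding rr_1[OF \<open>n\<ge>1\<close>] rr_2 rr_3 rr_4 by (rule rr2_gen)
qed




lemma falling_pos': "j \<le> n \<Longrightarrow> falling (2 * real n) j > 0"
  unfolding falling_def by (intro prod_pos) auto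

lemma rr_0: "rr n y 0 = 1" unfolding rr_def falling_def by simp

lemma Bc_ratio:
  "real (n choose j) * falling (real (2*n - j)) (n - j) * y^j = falling (real (2*n)) n * rr n y j"
proof (cases "j \<le> n")
  case True
  have fs: "falling (real (2*n)) n = falling (2 * real n) j * falling (real (2*n - j)) (n - j)"
    using falling_split[OF True, of "real (2*n)"] True by (simp add: of_nat_diff)
  have ch: "real (n choose j) = (\<Prod>i<j. real n - real i) / fact j"
    by (simp add: binomial_gbinomial gbinomial_prod_rev atLeast0LessThan)
  have "falling (2 * real n) j > 0" using True by (rule falling_pos')
  then show ?thesis unfolding fs ch rr_def by (simp add: field_simps)
next
  case False
  then have "(\<Prod>i<j. real n - real i) = 0" by (intro prod_zero) (auto intro!: bexI[of _ n])
  then have "rr n y j = 0" unfolding rr_def by simp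
  moreover have "n choose j = 0" using False by simp
  ultimately show ?thesis by simp
qed

lemma genBessel_0: "genBessel n 0 2 1 = complex_of_real (falling (real (2*n)) n)"
proof -
  have "genBessel n 0 2 1 = (\<Sum>j\<le>n. complex_of_real (real (n choose j) * falling (real (2*n - j)) (n - j)) * 0^j)"
    by (rule genBessel_reindex)
  also have "\<dots> = (\<Sum>j\<in>{0}. complex_of_real (real (n choose j) * falling (real (2*n - j)) (n - j)) * 0^j)"
    by (rule sum.mono_neutral_right) auto
  finally show ?thesis by simp
qed

lemma bessel_expand:
  assumes "n \<ge> 1"
  shows "\<exists>H. isCont H 0 \<and> (\<forall>\<omega>. (cmod (genBessel n (complex_of_real y * (\<i> * complex_of_real \<omega>)) 2 1))\<^sup>2 / (falling (real (2*n)) n)\<^sup>2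
     = 1 + y\<^sup>2 / (4 * (2 * real n - 1)) * \<omega>\<^sup>2 + y^4 * (real n - 1) / (16 * (2 * real n - 1)\<^sup>2 * (2 * real n - 3)) * \<omega>^4 + \<omega>^6 * H \<omega>)"
proof -
  define a where "a = falling (real (2*n)) n"
  have a: "a > 0" unfolding a_def using falling_pos'[of n n] by simp
  define A where "A j = real (n choose j) * falling (real (2*n - j)) (n - j) * y^j" for j
  have Aj: "A j = a * rr n y j" for j unfolding A_def a_def by (rule Bc_ratio)
  have Z: "\<forall>j>n. A j = 0" by (simp add: A_def)
  have gb: "genBessel n (complex_of_real y * (\<i> * complex_of_real \<omega>)) 2 1
      = (\<Sum>j\<le>n. complex_of_real (A j) * (\<i> * complex_of_real \<omega>)^j)" for \<omega>
    unfolding genBessel_reindex A_def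
    by (rule sum.cong) (simp_all add: power_mult_distrib)
  obtain H where H: "isCont H 0" and eq: "\<And>\<omega>. (cmod (\<Sum>j\<le>n. complex_of_real (A j) * (\<i> * complex_of_real \<omega>)^j))\<^sup>2
     = (A 0)\<^sup>2 + ((A 1)\<^sup>2 - 2*A 0*A 2)*\<omega>\<^sup>2 + ((A 2)\<^sup>2 - 2*A 1*A 3 + 2*A 0*A 4)*\<omega>^4 + \<omega>^6 * H \<omega>"
    using expand[OF Z] by blast
  define H' where "H' \<omega> = H \<omega> / a\<^sup>2" for \<omega>
  have "isCont H' 0" unfolding H'_def using H a by (intro continuous_intros) auto
  moreover have "(cmod (genBessel n (complex_of_real y * (\<i> * complex_of_real \<omega>)) 2 1))\<^sup>2 / (falling (real (2*n)) n)\<^sup>2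
     = 1 + y\<^sup>2 / (4 * (2 * real n - 1)) * \<omega>\<^sup>2 + y^4 * (real n - 1) / (16 * (2 * real n - 1)\<^sup>2 * (2 * real n - 3)) * \<omega>^4 + \<omega>^6 * H' \<omega>" for \<omega>
  proof -
    have "(cmod (genBessel n (complex_of_real y * (\<i> * complex_of_real \<omega>)) 2 1))\<^sup>2 / a\<^sup>2
       = 1 + ((rr n y 1)\<^sup>2 - 2 * rr n y 2) * \<omega>\<^sup>2 + ((rr n y 2)\<^sup>2 - 2 * rr n y 1 * rr n y 3 + 2 * rr n y 4) * \<omega>^4 + \<omega>^6 * H' \<omega>"
      unfolding gb eq unfolding Aj rr_0 H'_def using a by (simp add: field_simps power2_eq_square)
    then show ?thesis unfolding rr1[OF assms] rr2[OF assms] a_def .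
  qed
  ultimately show ?thesis by blast
qed




lemma ev_ne0: "eventually (\<lambda>\<omega>::real. \<omega> \<noteq> 0) (at 0)"
  by (simp add: eventually_at_filter)

lemma pow_smallo: "k < l \<Longrightarrow> (\<lambda>\<omega>::real. \<omega>^l) \<in> o[at 0](\<lambda>\<omega>. \<omega>^k)"
proof (rule smalloI_tendsto)
  assume "k < l"
  have "((\<lambda>\<omega>::real. \<omega>^(l-k)) \<longlongrightarrow> 0^(l-k)) (at 0)" by (intro tendsto_intros)
  then have "((\<lambda>\<omega>::real. \<omega>^(l-k)) \<longlongrightarrow> 0) (at 0)" using \<open>k<l\<close> by simp
  moreover have "eventually (\<lambda>\<omega>::real. \<omega>^(l-k) = \<omega>^l / \<omega>^k) (at 0)"
    using ev_ne0 by eventually_elim (use \<open>k<l\<close> in \<open>simp add: power_diff\<close>)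
  ultimately show "((\<lambda>\<omega>::real. \<omega>^l / \<omega>^k) \<longlongrightarrow> 0) (at 0)" by (rule Lim_transform_eventually)
  show "eventually (\<lambda>\<omega>::real. \<omega>^k \<noteq> 0) (at 0)" using ev_ne0 by eventually_elim simp
qed

lemma contO: "isCont H 0 \<Longrightarrow> (\<lambda>\<omega>::real. \<omega>^6 * H \<omega>) \<in> O[at 0](\<lambda>\<omega>. \<omega>^6)"
proof -
  assume "isCont H 0"
  then have "H \<in> O[at 0](\<lambda>_. 1)"
    by (intro bigoI_tendsto[where c = "H 0"]) (auto simp: isCont_def)
  from landau_o.big.mult[OF landau_o.big_refl this] show ?thesis by simp
qed

lemma uniq:
  fixes a b :: real
  assumes "(\<lambda>\<omega>::real. a*\<omega>\<^sup>2 + b*\<omega>^4) \<in> o[at 0](\<lambda>\<omega>. \<omega>^4)"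
  shows "a = 0 \<and> b = 0"
proof -
  have e1: "eventually (\<lambda>\<omega>. \<bar>a + b*\<omega>\<^sup>2\<bar> \<le> \<omega>\<^sup>2) (at (0::real))"
    using landau_o.smallD[OF assms zero_less_one] ev_ne0
  proof eventually_elim
    case (elim \<omega>)
    have ab: "\<bar>\<omega>^4\<bar> = \<omega>^4" by simp
    from elim have "\<bar>a*\<omega>\<^sup>2 + b*\<omega>^4\<bar> \<le> \<omega>^4" by (simp only: real_norm_def ab mult_1)
    then have "\<bar>\<omega>\<^sup>2 * (a + b*\<omega>\<^sup>2)\<bar> \<le> \<omega>\<^sup>2 * \<omega>\<^sup>2"
      by (simp add: algebra_simps power2_eq_square power4_eq_xxxx)
    then have "\<omega>\<^sup>2 * \<bar>a + b*\<omega>\<^sup>2\<bar> \<le> \<omega>\<^sup>2 * \<omega>\<^sup>2" by (simp add: abs_mult)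
    moreover have "0 < \<omega>\<^sup>2" using elim by simp
    ultimately show ?case using mult_le_cancel_left_pos by blast
  qed
  have l1: "((\<lambda>\<omega>::real. \<bar>a + b*\<omega>\<^sup>2\<bar>) \<longlongrightarrow> \<bar>a + b*0\<^sup>2\<bar>) (at 0)"
    by (intro tendsto_intros)
  have l2: "((\<lambda>\<omega>::real. \<omega>\<^sup>2) \<longlongrightarrow> 0\<^sup>2) (at 0)"
    by (intro tendsto_intros)
  have "\<bar>a + b*0\<^sup>2\<bar> \<le> (0::real)\<^sup>2"
    by (rule tendsto_le[OF _ l2 l1 e1]) simp
  then have a: "a = 0" by simp
  have "\<bar>b\<bar> \<le> c" if "c > 0" for c
  proof -
    have "eventually (\<lambda>\<omega>::real. \<bar>b\<bar> \<le> c) (at 0)"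
      using landau_o.smallD[OF assms that] ev_ne0
    proof eventually_elim
      case (elim \<omega>)
      then have "\<bar>b\<bar> * \<omega>^4 \<le> c * \<omega>^4" using a by (simp add: abs_mult)
      moreover have "\<omega>^4 > 0" using elim by simp
      ultimately show ?case by simp
    qed
    then show ?thesis by simp
  qed
  from this[of "\<bar>b\<bar>/2"] have "b = 0" by (cases "b = 0") auto
  with a show ?thesis by simp
qed




definition cA :: "nat \<Rightarrow> real \<Rightarrow> real" where "cA n y = y\<^sup>2 / (4 * (2 * real n - 1))"
definition cB :: "nat \<Rightarrow> real \<Rightarrow> real" where
  "cB n y = y^4 * (real n - 1) / (16 * (2 * real n - 1)\<^sup>2 * (2 * real n - 3))"

lemma budak_norm:
  fixes a b :: real
  assumes "a \<noteq> 0" "b \<noteq> 0"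
  shows "(cmod ((complex_of_real a / complex_of_real b) * (X / Y)))\<^sup>2 = ((cmod X)\<^sup>2 / b\<^sup>2) / ((cmod Y)\<^sup>2 / a\<^sup>2)"
proof -
  have "(cmod ((complex_of_real a / complex_of_real b) * (X / Y)))\<^sup>2 = (a\<^sup>2 / b\<^sup>2) * ((cmod X)\<^sup>2 / (cmod Y)\<^sup>2)"
    by (simp add: norm_mult norm_divide power_mult_distrib power_divide)
  also have "\<dots> = ((cmod X)\<^sup>2 / b\<^sup>2) / ((cmod Y)\<^sup>2 / a\<^sup>2)"
    by (simp add: divide_divide_eq_left mult.commute mult.left_commute)
  finally show ?thesis .
qed

lemma alg6:
  fixes p1 p2 q1 q2 C1 C2 w h1 h2 :: real
  assumes "C1 = p1 - q1" "C2 = p2 - q2 - q1 * C1"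
  shows "(1 + p1*w\<^sup>2 + p2*w^4 + w^6*h1) - (1 + C1*w\<^sup>2 + C2*w^4) * (1 + q1*w\<^sup>2 + q2*w^4 + w^6*h2)
    = w^6 * (h1 - C1*q2 - C2 * q1 - C2*q2*w\<^sup>2 - (1 + C1*w\<^sup>2 + C2*w^4)*h2)"
  unfolding assms(2) unfolding assms(1) by (simp add: algebra_simps power2_eq_square power_numeral_reduce)

lemma quot6:
  fixes P Q R N :: real
  assumes "P - R*Q = w * N" "Q \<noteq> 0"
  shows "P / Q - R = w * (N / Q)"
  using assms by (simp add: field_simps)

lemma budak_expand:
  fixes \<gamma> :: real
  assumes "1 \<le> m" "1 \<le> n"
  defines "C1 \<equiv> cA m (2*(\<gamma>-1)) - cA n (2*\<gamma>)"
  defines "C2 \<equiv> cB m (2*(\<gamma>-1)) - cB n (2*\<gamma>) - cA n (2*\<gamma>) * C1"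
  shows "(\<lambda>\<omega>. (cmod (budakG \<gamma> m n (\<i> * complex_of_real \<omega>)))\<^sup>2 - (1 + C1*\<omega>\<^sup>2 + C2*\<omega>^4)) \<in> O[at 0](\<lambda>\<omega>. \<omega>^6)"
proof -
  define x where "x = 2*(\<gamma>-1)"
  define y where "y = 2*\<gamma>"
  define am where "am = falling (real (2*m)) m"
  define an where "an = falling (real (2*n)) n"
  have am: "am > 0" unfolding am_def using falling_pos'[of m m] by simp
  have an: "an > 0" unfolding an_def using falling_pos'[of n n] by simp
  define P where "P \<omega> = (cmod (genBessel m (complex_of_real x * (\<i> * complex_of_real \<omega>)) 2 1))\<^sup>2 / am\<^sup>2" for \<omega>
  define Q where "Q \<omega> = (cmod (genBessel n (complex_of_real y * (\<i> * complex_of_real \<omega>)) 2 1))\<^sup>2 / an\<^sup>2" for \<omega>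
  obtain H1 where H1: "isCont H1 0" and P: "\<And>\<omega>. P \<omega> = 1 + cA m x * \<omega>\<^sup>2 + cB m x * \<omega>^4 + \<omega>^6 * H1 \<omega>"
    using bessel_expand[OF assms(1), of x] unfolding P_def am_def cA_def cB_def by blast
  obtain H2 where H2: "isCont H2 0" and Q: "\<And>\<omega>. Q \<omega> = 1 + cA n y * \<omega>\<^sup>2 + cB n y * \<omega>^4 + \<omega>^6 * H2 \<omega>"
    using bessel_expand[OF assms(2), of y] unfolding Q_def an_def cA_def cB_def by blast
  have G: "(cmod (budakG \<gamma> m n (\<i> * complex_of_real \<omega>)))\<^sup>2 = P \<omega> / Q \<omega>" for \<omega>
    unfolding budakG_def genBessel_0 P_def Q_def x_def y_def am_def[symmetric] an_def[symmetric]
    using am an by (intro budak_norm) auto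
  define R where "R \<omega> = 1 + C1*\<omega>\<^sup>2 + C2*\<omega>^4" for \<omega>
  define H3 where "H3 \<omega> = (H1 \<omega> - C1 * cB n y - C2 * cA n y - C2 * cB n y * \<omega>\<^sup>2 - R \<omega> * H2 \<omega>) / Q \<omega>" for \<omega>
  have Qc: "isCont Q 0"
  proof -
    have "isCont (\<lambda>\<omega>. 1 + cA n y * \<omega>\<^sup>2 + cB n y * \<omega>^4 + \<omega>^6 * H2 \<omega>) 0"
      using H2 by (intro continuous_intros)
    then show ?thesis by (simp add: Q[abs_def])
  qed
  have Q0: "Q 0 = 1" by (simp add: Q)
  have evQ: "eventually (\<lambda>\<omega>. Q \<omega> > 0) (at 0)"
  proof -
    have "0 < Q 0" by (simp add: Q0)
    from order_tendstoD(1)[OF Qc[unfolded isCont_def] this] show ?thesis .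
  qed
  have "isCont H3 0" unfolding H3_def R_def using H1 H2 Qc Q0 by (intro continuous_intros) auto
  then have O: "(\<lambda>\<omega>. \<omega>^6 * H3 \<omega>) \<in> O[at 0](\<lambda>\<omega>. \<omega>^6)" by (rule contO)
  have ev: "eventually (\<lambda>\<omega>. \<omega>^6 * H3 \<omega> = (cmod (budakG \<gamma> m n (\<i> * complex_of_real \<omega>)))\<^sup>2 - (1 + C1*\<omega>\<^sup>2 + C2*\<omega>^4)) (at 0)"
    using evQ
  proof eventually_elim
    case (elim \<omega>)
    have "P \<omega> - R \<omega> * Q \<omega> = \<omega>^6 * (H1 \<omega> - C1 * cB n y - C2 * cA n y - C2 * cB n y * \<omega>\<^sup>2 - R \<omega> * H2 \<omega>)"
      unfolding P Q R_def
      by (rule alg6) (simp_all add: C1_def C2_def x_def y_def)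
    then have "P \<omega> / Q \<omega> - R \<omega> = \<omega>^6 * H3 \<omega>"
      unfolding H3_def using elim by (intro quot6) auto
    then show ?case unfolding G R_def by simp
  qed
  from O show ?thesis unfolding landau_o.big.in_cong[OF ev] .
qed




lemma bigo_eq: "f \<in> O[F](h) \<Longrightarrow> (\<And>x. f x = g x) \<Longrightarrow> g \<in> O[F](h)"
  by (metis ext)
lemma smallo_eq: "f \<in> o[F](h) \<Longrightarrow> (\<And>x. f x = g x) \<Longrightarrow> g \<in> o[F](h)"
  by (metis ext)

lemma O6o4: "f \<in> O[at 0](\<lambda>\<omega>::real. \<omega>^6) \<Longrightarrow> f \<in> o[at 0](\<lambda>\<omega>. \<omega>^4)"
  using landau_o.big_small_trans pow_smallo[of 4 6] by auto

lemma c2_ne: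
  fixes M N g :: real
  assumes "M \<ge> 1" "N > M" "2*M - 3 \<noteq> 0" "2*N - 3 \<noteq> 0" "g > 0"
    and key: "(g-1)\<^sup>2 * (2*N-1) = g\<^sup>2 * (2*M-1)"
  shows "(2*(g-1))^4 * (M-1) / (16 * (2*M-1)\<^sup>2 * (2*M-3)) - (2*g)^4 * (N-1) / (16 * (2*N-1)\<^sup>2 * (2*N-3)) \<noteq> 0"
proof
  define K where "K = g\<^sup>2 * (2*M-1)"
  have K: "K > 0" unfolding K_def using assms by simp
  have "((g-1)\<^sup>2 * (2*N-1))\<^sup>2 = K\<^sup>2" using key unfolding K_def by simp
  then have a: "(g-1)^4 * (2*N-1)\<^sup>2 = K\<^sup>2" by (simp add: power_mult_distrib flip: power_mult)
  have b: "g^4 * (2*M-1)\<^sup>2 = K\<^sup>2" unfolding K_def by (simp add: power_mult_distrib flip: power_mult)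
  have nz: "16 * (2*M-1)\<^sup>2 * (2*M-3) \<noteq> 0" "16 * (2*N-1)\<^sup>2 * (2*N-3) \<noteq> 0" using assms by auto
  assume "(2*(g-1))^4 * (M-1) / (16 * (2*M-1)\<^sup>2 * (2*M-3)) - (2*g)^4 * (N-1) / (16 * (2*N-1)\<^sup>2 * (2*N-3)) = 0"
  then have "(2*(g-1))^4 * (M-1) / (16 * (2*M-1)\<^sup>2 * (2*M-3)) = (2*g)^4 * (N-1) / (16 * (2*N-1)\<^sup>2 * (2*N-3))"
    by simp
  then have "(2*(g-1))^4 * (M-1) * (16 * (2*N-1)\<^sup>2 * (2*N-3)) = (2*g)^4 * (N-1) * (16 * (2*M-1)\<^sup>2 * (2*M-3))"
    using frac_eq_eq[OF nz] by blast
  moreover have p1: "(2*(g-1))^4 = 16*(g-1)^4" "(2*g)^4 = 16*g^4" by (simp_all only: power_mult_distrib) simp_all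
  ultimately have "16*(g-1)^4 * (M-1) * (16 * (2*N-1)\<^sup>2 * (2*N-3)) = 16*g^4 * (N-1) * (16 * (2*M-1)\<^sup>2 * (2*M-3))"
    by (simp only: p1)
  then have "256 * ((g-1)^4 * (2*N-1)\<^sup>2) * ((M-1) * (2*N-3)) = 256 * (g^4 * (2*M-1)\<^sup>2) * ((N-1) * (2*M-3))"
    by algebra
  then have "K\<^sup>2 * ((M-1) * (2*N-3)) = K\<^sup>2 * ((N-1) * (2*M-3))" unfolding a b by simp
  then have "(M-1) * (2*N-3) = (N-1) * (2*M-3)" using K by simp
  then show False using assms by (simp add: algebra_simps)
qed

lemma gamma_roots:
  fixes a b g S :: real
  assumes "a > b" "b > 0" "S*S = a*b"
  shows "(g-1)\<^sup>2 * a - g\<^sup>2 * b = (a-b) * (g - (a+S)/(a-b)) * (g - (a-S)/(a-b))"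
proof -
  have d: "a - b \<noteq> 0" using assms by simp
  have e1: "g - (a+S)/(a-b) = ((a-b)*g - (a+S))/(a-b)" using d by (simp add: field_simps)
  have e2: "g - (a-S)/(a-b) = ((a-b)*g - (a-S))/(a-b)" using d by (simp add: field_simps)
  have X: "((a-b)*g - (a+S)) * ((a-b)*g - (a-S)) = (a-b) * ((g-1)\<^sup>2 * a - g\<^sup>2 * b)"
  proof -
    have "((a-b)*g - (a+S)) * ((a-b)*g - (a-S)) = ((a-b)*g - a)\<^sup>2 - S*S"
      by (simp add: algebra_simps power2_eq_square)
    also have "\<dots> = (a-b) * ((g-1)\<^sup>2 * a - g\<^sup>2 * b)" unfolding assms(3)
      by (simp add: algebra_simps power2_eq_square)
    finally show ?thesis .
  qed
  show ?thesis unfolding e1 e2 using d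
    by (simp add: X)
qed

theorem mainTheorem7:
  fixes m n :: nat and \<gamma> c1 c2 :: real
  assumes "1 \<le> m" and "m < n" and "\<gamma> > 0"
    and taylor: "(\<lambda>\<omega>::real. (cmod (budakG \<gamma> m n (\<i> * of_real \<omega>)))\<^sup>2
                   - (1 + c1 * \<omega>\<^sup>2 + c2 * \<omega> ^ 4)) \<in> O[at 0](\<lambda>\<omega>. \<omega> ^ 6)"
  defines "\<gamma>p \<equiv> ((2 * real n - 1) + sqrt ((2 * real n - 1) * (2 * real m - 1))) / (2 * (real n - real m))"
    and "\<gamma>m \<equiv> ((2 * real n - 1) - sqrt ((2 * real n - 1) * (2 * real m - 1))) / (2 * (real n - real m))"
  shows "(c1 = 0 \<longleftrightarrow> (\<gamma> = \<gamma>p \<or> \<gamma> = \<gamma>m))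
       \<and> \<gamma>p > 1/2 \<and> \<gamma>m > 1/2
       \<and> (c1 \<noteq> 0 \<longrightarrow> max_flat (budakG \<gamma> m n) 1)
       \<and> \<not> (c1 = 0 \<and> c2 = 0)
       \<and> (\<forall>k>2. \<not> max_flat (budakG \<gamma> m n) k)
       \<and> (max_flat (budakG \<gamma> m n) 2 \<longleftrightarrow> (\<gamma> = \<gamma>p \<or> \<gamma> = \<gamma>m))"
proof -
  have m1: "1 \<le> m" and n1: "1 \<le> n" using assms by auto
  define C1 where "C1 = cA m (2*(\<gamma>-1)) - cA n (2*\<gamma>)"
  define C2 where "C2 = cB m (2*(\<gamma>-1)) - cB n (2*\<gamma>) - cA n (2*\<gamma>) * C1"
  define Gf where "Gf \<omega> = (cmod (budakG \<gamma> m n (\<i> * complex_of_real \<omega>)))\<^sup>2" for \<omega>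
  have B: "(\<lambda>\<omega>. Gf \<omega> - (1 + C1*\<omega>\<^sup>2 + C2*\<omega>^4)) \<in> O[at 0](\<lambda>\<omega>. \<omega>^6)"
    using budak_expand[OF m1 n1, of \<gamma>] unfolding Gf_def C1_def C2_def .
  have T: "(\<lambda>\<omega>. Gf \<omega> - (1 + c1*\<omega>\<^sup>2 + c2*\<omega>^4)) \<in> O[at 0](\<lambda>\<omega>. \<omega>^6)"
    using taylor unfolding Gf_def .
  have "(\<lambda>\<omega>. (C1 - c1)*\<omega>\<^sup>2 + (C2 - c2)*\<omega>^4) \<in> O[at 0](\<lambda>\<omega>. \<omega>^6)"
    by (rule bigo_eq[OF sum_in_bigo(2)[OF T B]]) (simp add: algebra_simps)
  from uniq[OF O6o4[OF this]] have c1: "c1 = C1" and c2: "c2 = C2" by auto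
  define a where "a = 2 * real n - 1"
  define b where "b = 2 * real m - 1"
  define S where "S = sqrt (a*b)"
  have ab: "a > b" "b > 0" using assms unfolding a_def b_def by auto
  have SS: "S*S = a*b" unfolding S_def using ab by simp
  have S0: "S \<ge> 0" unfolding S_def using ab by simp
  have gp: "\<gamma>p = (a+S)/(a-b)" unfolding \<gamma>p_def a_def b_def S_def by (simp add: algebra_simps)
  have gm: "\<gamma>m = (a-S)/(a-b)" unfolding \<gamma>m_def a_def b_def S_def by (simp add: algebra_simps)
  have sq: "(2*(\<gamma>-1))\<^sup>2 = 4*(\<gamma>-1)\<^sup>2" "(2*\<gamma>)\<^sup>2 = 4*\<gamma>\<^sup>2" by (simp_all only: power_mult_distrib) simp_all
  have C1f: "C1 = ((\<gamma>-1)\<^sup>2 * a - \<gamma>\<^sup>2 * b) / (a*b)"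
    unfolding C1_def cA_def a_def[symmetric] b_def[symmetric] sq using ab
    by (simp add: field_simps power_mult_distrib)
  have C1z: "C1 = 0 \<longleftrightarrow> (\<gamma>-1)\<^sup>2 * a = \<gamma>\<^sup>2 * b" unfolding C1f using ab by simp
  have i1: "c1 = 0 \<longleftrightarrow> (\<gamma> = \<gamma>p \<or> \<gamma> = \<gamma>m)"
  proof -
    have "c1 = 0 \<longleftrightarrow> (a-b) * (\<gamma> - \<gamma>p) * (\<gamma> - \<gamma>m) = 0"
      unfolding c1 gp gm gamma_roots[OF ab SS, of \<gamma>, symmetric] C1z by simp
    also have "\<dots> \<longleftrightarrow> (\<gamma> = \<gamma>p \<or> \<gamma> = \<gamma>m)" using ab by simp
    finally show ?thesis .
  qed
  have i2: "\<gamma>p > 1/2" unfolding gp using ab S0 by (simp add: field_simps)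
  have "S < (a+b)/2"
  proof -
    have "a*b < ((a+b)/2)\<^sup>2"
    proof -
      have "((a+b)/2)\<^sup>2 - a*b = ((a-b)/2)\<^sup>2" by (simp add: power2_eq_square field_simps)
      moreover have "((a-b)/2)\<^sup>2 > 0" using ab by simp
      ultimately show ?thesis by linarith
    qed
    then have "sqrt (a*b) < sqrt (((a+b)/2)\<^sup>2)" by (simp only: real_sqrt_less_iff)
    then show ?thesis unfolding S_def using ab by simp
  qed
  then have i3: "\<gamma>m > 1/2" unfolding gm using ab by (simp add: field_simps)
  have nz3: "2 * real k - 3 \<noteq> 0" for k :: nat
  proof
    assume "2 * real k - 3 = 0"
    then have "real (2*k) = real 3" by simp
    then have "2*k = 3" by (simp only: of_nat_eq_iff)
    then show False by presburger
  qed
  have i5: "\<not> (c1 = 0 \<and> c2 = 0)"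
  proof
    assume h: "c1 = 0 \<and> c2 = 0"
    then have "C1 = 0" using c1 by simp
    then have key: "(\<gamma>-1)\<^sup>2 * (2 * real n - 1) = \<gamma>\<^sup>2 * (2 * real m - 1)" using C1z a_def b_def by simp
    have "C2 = cB m (2*(\<gamma>-1)) - cB n (2*\<gamma>)" unfolding C2_def using \<open>C1 = 0\<close> by simp
    also have "\<dots> \<noteq> 0" unfolding cB_def
      by (rule c2_ne[OF _ _ nz3 nz3 \<open>\<gamma> > 0\<close> key]) (use assms in auto)
    finally show False using h c2 by simp
  qed
  have Ts: "(\<lambda>\<omega>. Gf \<omega> - (1 + c1*\<omega>\<^sup>2 + c2*\<omega>^4)) \<in> o[at 0](\<lambda>\<omega>. \<omega>^4)" using O6o4[OF T] .
  have i4: "c1 \<noteq> 0 \<longrightarrow> max_flat (budakG \<gamma> m n) 1"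
  proof
    assume "c1 \<noteq> 0"
    have "(\<lambda>\<omega>. Gf \<omega> - (1 + c1*\<omega>\<^sup>2 + c2*\<omega>^4)) \<in> o[at 0](\<lambda>\<omega>. \<omega>^2)"
      using landau_o.big_small_trans[OF T pow_smallo[of 2 6]] by simp
    moreover have "(\<lambda>\<omega>::real. c2*\<omega>^4) \<in> o[at 0](\<lambda>\<omega>. \<omega>^2)" using pow_smallo[of 2 4] by simp
    ultimately have "(\<lambda>\<omega>. (Gf \<omega> - (1 + c1*\<omega>\<^sup>2 + c2*\<omega>^4)) + c2*\<omega>^4) \<in> o[at 0](\<lambda>\<omega>. \<omega>^2)"
      by (rule sum_in_smallo(1))
    then have "(\<lambda>\<omega>. Gf \<omega> - 1 - c1 * \<omega>^2) \<in> o[at 0](\<lambda>\<omega>. \<omega>^2)"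
      by (rule smallo_eq) (simp add: algebra_simps)
    then show "max_flat (budakG \<gamma> m n) 1" unfolding max_flat_def Gf_def mult_1_right using \<open>c1 \<noteq> 0\<close> by blast
  qed
  have i6: "\<forall>k>2. \<not> max_flat (budakG \<gamma> m n) k"
  proof (intro allI impI notI)
    fix k :: nat assume "k > 2" "max_flat (budakG \<gamma> m n) k"
    then obtain c where "c \<noteq> 0" and hc: "(\<lambda>\<omega>. Gf \<omega> - 1 - c * \<omega>^(2*k)) \<in> o[at 0](\<lambda>\<omega>. \<omega>^(2*k))"
      unfolding max_flat_def Gf_def by blast
    have pk: "(\<lambda>\<omega>::real. \<omega>^(2*k)) \<in> O[at 0](\<lambda>\<omega>. \<omega>^6)"
    proof (cases "k = 3")
      case True then show ?thesis by simp
    next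
      case False then show ?thesis
        using landau_o.small_imp_big[OF pow_smallo[of 6 "2*k"]] \<open>k > 2\<close> by simp
    qed
    have h1: "(\<lambda>\<omega>. Gf \<omega> - 1 - c * \<omega>^(2*k)) \<in> O[at 0](\<lambda>\<omega>. \<omega>^6)"
      by (rule landau_o.big_trans[OF landau_o.small_imp_big[OF hc] pk])
    have h2: "(\<lambda>\<omega>::real. c * \<omega>^(2*k)) \<in> O[at 0](\<lambda>\<omega>. \<omega>^6)" using pk by simp
    have "(\<lambda>\<omega>. (Gf \<omega> - 1 - c * \<omega>^(2*k)) + c * \<omega>^(2*k) - (Gf \<omega> - (1 + c1*\<omega>\<^sup>2 + c2*\<omega>^4))) \<in> O[at 0](\<lambda>\<omega>. \<omega>^6)"
      by (intro sum_in_bigo h1 h2 T)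
    then have "(\<lambda>\<omega>. c1*\<omega>\<^sup>2 + c2*\<omega>^4) \<in> O[at 0](\<lambda>\<omega>. \<omega>^6)"
      by (rule bigo_eq) (simp add: algebra_simps)
    from uniq[OF O6o4[OF this]] i5 show False by simp
  qed
  have i7: "max_flat (budakG \<gamma> m n) 2 \<longleftrightarrow> (\<gamma> = \<gamma>p \<or> \<gamma> = \<gamma>m)"
  proof
    assume "max_flat (budakG \<gamma> m n) 2"
    then obtain c where hc: "(\<lambda>\<omega>. Gf \<omega> - 1 - c * \<omega>^(2*2)) \<in> o[at 0](\<lambda>\<omega>. \<omega>^(2*2))"
      unfolding max_flat_def Gf_def by blast
    have "(\<lambda>\<omega>. (Gf \<omega> - 1 - c * \<omega>^(2*2)) - (Gf \<omega> - (1 + c1*\<omega>\<^sup>2 + c2*\<omega>^4))) \<in> o[at 0](\<lambda>\<omega>. \<omega>^4)"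
      using sum_in_smallo(2)[OF hc[simplified] Ts] by simp
    then have "(\<lambda>\<omega>. c1*\<omega>\<^sup>2 + (c2 - c)*\<omega>^4) \<in> o[at 0](\<lambda>\<omega>. \<omega>^4)"
      by (rule smallo_eq) (simp add: algebra_simps)
    from uniq[OF this] have "c1 = 0" by simp
    with i1 show "\<gamma> = \<gamma>p \<or> \<gamma> = \<gamma>m" by simp
  next
    assume "\<gamma> = \<gamma>p \<or> \<gamma> = \<gamma>m"
    with i1 have "c1 = 0" by simp
    with i5 have "c2 \<noteq> 0" by simp
    have "(\<lambda>\<omega>. Gf \<omega> - 1 - c2 * \<omega>^(2*2)) \<in> o[at 0](\<lambda>\<omega>. \<omega>^(2*2))"
      using Ts \<open>c1 = 0\<close> by (simp add: algebra_simps)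
    then show "max_flat (budakG \<gamma> m n) 2" unfolding max_flat_def Gf_def using \<open>c2 \<noteq> 0\<close> by blast
  qed
  show ?thesis using i1 i2 i3 i4 i5 i6 i7 by blast
qed


end
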